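(* Let $G$ and $H$ be finite abelian groups, written additively, of the same even order $k$, and let $f:G\to H$ be semi-planar. Suppose $S(G,H;f)$ splits into two substructures $S_1$ and $S_2$ with $\mathcal{L}(0,0)\in S_1$. Then there is a subgroup $B$ of $H$ of index $2$ such that either (i) for all $a\in G$, $b\in H$: $\mathcal{L}(a,b)\in S_1$ if and only if $b\in B$; or (ii) there is a subgroup $A$ of $G$ of index $2$ such that, for any $g\in G\setminus A$ and $h\in H\setminus B$, and all $a\in G$, $b\in H$: $\mathcal{L}(a,b)\in S_1$ if and only if ($a\in A$ and $b\in B$) or ($a\in A+g$ and $b\in B+h$).
   Context: A function $f:G\to H$ is semi-planar if for every non-identity $a\in G$ and every $y\in H$, the equation $f(x+a)-f(x)=y$ has either $0$ or $2$ solutions $x\in G$. The incidence structure $S(G,H;f)$ has points $(x,y)\in G\times H$ and lines $\mathcal{L}(a,b)$ for $(a,b)\in G\times H$, with $(x,y)$ incident with $\mathcal{L}(a,b)$ iff $y=f(x-a)+b$. Its incidence graph is the bipartite graph on points and lines with an edge for each incident pair. $S(G,H;f)$ splits into two substructures $S_1,S_2$ if its incidence graph has exactly two connected components; $S_1,S_2$ are the incidence structures formed by the points and lines of the two components, and $\mathcal{L}(a,b)\in S_i$ means the line lies in component $S_i$. *)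

theory Defs
  imports "HOL-Library.Cardinality"
begin

definition subgroup_add :: "'a::ab_group_add set \<Rightarrow> bool" where
  "subgroup_add B \<longleftrightarrow> 0 \<in> B \<and> (\<forall>x\<in>B. \<forall>y\<in>B. x + y \<in> B) \<and> (\<forall>x\<in>B. - x \<in> B)"

definition index_two :: "'a::{ab_group_add,finite} set \<Rightarrow> bool" where
  "index_two B \<longleftrightarrow> card (UNIV :: 'a set) = 2 * card B"

definition semi_planar :: "('g::{ab_group_add,finite} \<Rightarrow> 'h::ab_group_add) \<Rightarrow> bool" where
  "semi_planar f \<longleftrightarrow>
     (\<forall>a. a \<noteq> 0 \<longrightarrow> (\<forall>y. card {x. f (x + a) - f x = y} = 0 \<or> card {x. f (x + a) - f x = y} = 2))"

definition incident :: "('g::ab_group_add \<Rightarrow> 'h::ab_group_add) \<Rightarrow> 'g \<times> 'h \<Rightarrow> 'g \<times> 'h \<Rightarrow> bool" where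
  "incident f p l \<longleftrightarrow> snd p = f (fst p - fst l) + snd l"

text \<open>Edges of the bipartite incidence graph; vertices are Inl point / Inr line.\<close>
definition inc_edges :: "('g::ab_group_add \<Rightarrow> 'h::ab_group_add) \<Rightarrow> (('g \<times> 'h) + ('g \<times> 'h)) rel" where
  "inc_edges f = {(Inl p, Inr l) | p l. incident f p l} \<union> {(Inr l, Inl p) | p l. incident f p l}"

definition connected_rel :: "('g::ab_group_add \<Rightarrow> 'h::ab_group_add) \<Rightarrow> (('g \<times> 'h) + ('g \<times> 'h)) rel" where
  "connected_rel f = (inc_edges f)\<^sup>*"

text \<open>S(G,H;f) splits into two substructures: exactly two connected components.\<close>
definition splits_in_two :: "('g::ab_group_add \<Rightarrow> 'h::ab_group_add) \<Rightarrow> bool" where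
  "splits_in_two f \<longleftrightarrow> card (UNIV // connected_rel f) = 2"

definition line_in_S1 :: "('g::ab_group_add \<Rightarrow> 'h::ab_group_add) \<Rightarrow> 'g \<Rightarrow> 'h \<Rightarrow> bool" where
  "line_in_S1 f a b \<longleftrightarrow> (Inr (0, 0), Inr (a, b)) \<in> connected_rel f"

end

theory Submission
  imports Defs
begin

definition trv :: "'g::ab_group_add \<Rightarrow> 'h::ab_group_add \<Rightarrow> ('g \<times> 'h) + ('g \<times> 'h) \<Rightarrow> ('g \<times> 'h) + ('g \<times> 'h)" where
  "trv u v = map_sum (\<lambda>(x,y). (x+u,y+v)) (\<lambda>(a,b). (a+u,b+v))"

lemma trv_edge:
  assumes "(p,q) \<in> inc_edges f"
  shows "(trv u v p, trv u v q) \<in> inc_edges f"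
  using assms unfolding inc_edges_def incident_def trv_def
  by (auto simp: algebra_simps split: prod.splits)

lemma trv_R:
  assumes "(p,q) \<in> connected_rel f"
  shows "(trv u v p, trv u v q) \<in> connected_rel f"
  using assms unfolding connected_rel_def
proof (induction rule: rtrancl_induct)
  case base then show ?case by simp
next
  case (step y z)
  then show ?case using trv_edge[OF step(2)] by (meson rtrancl_into_rtrancl)
qed

lemma line_tr:
  assumes "(Inr (a,b), Inr (c,d)) \<in> connected_rel f"
  shows "(Inr (a+u,b+v), Inr (c+u,d+v)) \<in> connected_rel f"
  using trv_R[OF assms, of u v] by (simp add: trv_def)

lemma R_sym: "(p,q) \<in> connected_rel f \<Longrightarrow> (q,p) \<in> connected_rel f"
proof -
  have "sym (inc_edges f)" unfolding inc_edges_def sym_def by auto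
  then have "sym (connected_rel f)" unfolding connected_rel_def using sym_rtrancl by blast
  then show "(p,q) \<in> connected_rel f \<Longrightarrow> (q,p) \<in> connected_rel f" by (meson symD)
qed

lemma R_trans: "(p,q) \<in> connected_rel f \<Longrightarrow> (q,r) \<in> connected_rel f \<Longrightarrow> (p,r) \<in> connected_rel f"
  unfolding connected_rel_def by auto

lemma R_equiv: "equiv UNIV (connected_rel f)"
proof (rule equivI)
  show "refl (connected_rel f)" unfolding refl_on_def connected_rel_def by blast
  show "sym (connected_rel f)" by (rule symI) (rule R_sym)
  show "trans (connected_rel f)" by (rule transI) (rule R_trans)
qed simp

lemma point_line: "(Inl (x,y), Inr (a, y - f (x-a))) \<in> connected_rel f"
proof -
  have "(Inl (x,y), Inr (a, y - f (x-a))) \<in> inc_edges f"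
    unfolding inc_edges_def incident_def by auto
  then show ?thesis unfolding connected_rel_def by auto
qed

lemma index_two_lemma:
  fixes S :: "'a::{ab_group_add,finite} set"
  assumes "subgroup_add S" "h0 \<notin> S" "\<And>x y. x \<notin> S \<Longrightarrow> y \<notin> S \<Longrightarrow> x - y \<in> S"
  shows "index_two S"
proof -
  have U1: "y \<in> S \<union> (\<lambda>s. s + h0) ` S" for y
  proof (cases "y \<in> S")
    case False
    then have "y - h0 \<in> S" using assms by blast
    then have "y \<in> (\<lambda>s. s + h0) ` S" by (rule rev_image_eqI) simp
    then show ?thesis by blast
  qed simp
  have U: "UNIV = S \<union> (\<lambda>s. s + h0) ` S" using U1 by blast
  have D: "S \<inter> (\<lambda>s. s + h0) ` S = {}"
  proof (auto)
    fix s assume "s \<in> S" "s + h0 \<in> S"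
    then have "- s + (s + h0) \<in> S" using assms(1) unfolding subgroup_add_def by blast
    then show False using assms(2) by simp
  qed
  have "card ((\<lambda>s. s + h0) ` S) = card S" by (rule card_image) (auto simp: inj_on_def)
  then show ?thesis unfolding index_two_def
    by (subst U, subst card_Un_disjoint) (use D in auto)
qed

theorem theorem4:
  fixes f :: "'g::{ab_group_add,finite} \<Rightarrow> 'h::{ab_group_add,finite}"
  assumes "CARD('g) = CARD('h)"
    and "even CARD('g)"
    and "semi_planar f"
    and "splits_in_two f"
  shows "\<exists>B::'h set. subgroup_add B \<and> index_two B \<and>
     ((\<forall>a b. line_in_S1 f a b \<longleftrightarrow> b \<in> B) \<or>
      (\<exists>A::'g set. subgroup_add A \<and> index_two A \<and>
         (\<forall>g h. g \<notin> A \<longrightarrow> h \<notin> B \<longrightarrow>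
            (\<forall>a b. line_in_S1 f a b \<longleftrightarrow>
               ((a \<in> A \<and> b \<in> B) \<or> (a \<in> (\<lambda>x. x + g) ` A \<and> b \<in> (\<lambda>y. y + h) ` B))))))"
proof -
  let ?R = "connected_rel f"
  define K where "K = {(a,b). line_in_S1 f a b}"
  have Kdef: "(a,b) \<in> K \<longleftrightarrow> (Inr (0,0), Inr (a,b)) \<in> ?R" for a b
    by (simp add: K_def line_in_S1_def)
  have K0: "(0,0) \<in> K" by (simp add: Kdef connected_rel_def)
  have Kadd: "(a+c,b+d) \<in> K" if "(a,b) \<in> K" "(c,d) \<in> K" for a b c d
  proof -
    have "(Inr (0+a,0+b), Inr (c+a,d+b)) \<in> ?R" using line_tr[where a=0 and b=0 and c=c and d=d and f=f and u=a and v=b] that by (simp add: Kdef)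
    then show ?thesis using that R_trans unfolding Kdef by (fastforce simp: add.commute)
  qed
  have Kneg: "(-a,-b) \<in> K" if "(a,b) \<in> K" for a b
  proof -
    have "(Inr (0+-a,0+-b), Inr (a+-a,b+-b)) \<in> ?R" using line_tr[where a=0 and b=0 and c=a and d=b and f=f and u="-a" and v="-b"] that by (simp add: Kdef)
    then show ?thesis using R_sym unfolding Kdef by fastforce
  qed
  have Ksub: "(a-c,b-d) \<in> K" if "(a,b) \<in> K" "(c,d) \<in> K" for a b c d
    using Kadd[OF that(1) Kneg[OF that(2)]] by simp
  have eqv: "equiv UNIV ?R" by (rule R_equiv)
  have fin: "finite (UNIV // ?R)" by simp
  obtain X Y where XY: "UNIV // ?R = {X,Y}" "X \<noteq> Y"
    using assms(4) unfolding splits_in_two_def card_2_iff by blast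
  have three: False if "(p,q) \<notin> ?R" "(q,r) \<notin> ?R" "(p,r) \<notin> ?R" for p q r
  proof -
    have d: "?R `` {p} \<noteq> ?R `` {q}" "?R `` {q} \<noteq> ?R `` {r}" "?R `` {p} \<noteq> ?R `` {r}"
      using that equiv_class_eq_iff[OF eqv] by blast+
    have s: "{?R `` {p}, ?R `` {q}, ?R `` {r}} \<subseteq> UNIV // ?R" by (auto intro: quotientI)
    have c1: "card {?R `` {p}, ?R `` {q}, ?R `` {r}} \<le> card (UNIV // ?R)"
      by (rule card_mono[OF fin s])
    have c2: "card {?R `` {p}, ?R `` {q}, ?R `` {r}} = 3" using d by simp
    show False using c1 c2 assms(4) unfolding splits_in_two_def by simp
  qed
  have Q: "(a-c,b-d) \<in> K" if "(a,b) \<notin> K" "(c,d) \<notin> K" for a b c d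
  proof (rule ccontr)
    assume n: "(a-c,b-d) \<notin> K"
    have "(Inr (a,b), Inr (c,d)) \<notin> ?R"
    proof
      assume "(Inr (a,b), Inr (c,d)) \<in> ?R"
      from line_tr[OF this, of "-c" "-d"] have "(Inr (a-c,b-d), Inr (0,0)) \<in> ?R" by simp
      then show False using n R_sym unfolding Kdef by blast
    qed
    then show False using three[of "Inr (0,0)" "Inr (a,b)" "Inr (c,d)"] that unfolding Kdef by blast
  qed
  obtain a0 b0 where ab0: "(a0,b0) \<notin> K"
  proof -
    obtain p q where "X = ?R `` {p}" "Y = ?R `` {q}" using XY(1)
      by (metis insertI1 insert_commute quotientE)
    then have pq: "(p,q) \<notin> ?R" using XY(2) eqv by (auto simp: equiv_class_eq_iff)
    have lin: "\<exists>l. (v, Inr l) \<in> ?R" for v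
    proof (cases v)
      case (Inl pt) then show ?thesis using point_line[where x="fst pt" and y="snd pt" and f=f and a=0] by (metis prod.collapse)
    next
      case (Inr l) then show ?thesis unfolding connected_rel_def by blast
    qed
    obtain l1 l2 where l: "(p, Inr l1) \<in> ?R" "(q, Inr l2) \<in> ?R" using lin by blast
    show ?thesis
    proof (rule ccontr)
      assume "\<not> ?thesis"
      then have "l1 \<in> K" "l2 \<in> K" using that by (metis surj_pair)+
      then have "(Inr l1, Inr l2) \<in> ?R" unfolding Kdef
        by (metis Kdef R_sym R_trans surj_pair)
      then show False using pq l R_trans R_sym by blast
    qed
  qed
  have proj: "\<exists>b. (g,b) \<in> K" for g
  proof -
    have e1: "(Inl (0::'g,0::'h), Inr (0, 0 - f (0-0))) \<in> ?R" by (rule point_line)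
    have e2: "(Inl (0::'g,0::'h), Inr (g, 0 - f (0-g))) \<in> ?R" by (rule point_line)
    have c: "(Inr (0, - f 0), Inr (g, - f (- g))) \<in> ?R" using e1 e2 R_sym R_trans by fastforce
    show ?thesis
    proof (cases "(0, - f 0) \<in> K")
      case True
      then show ?thesis using c R_trans unfolding Kdef by blast
    next
      case False
      have "(g, - f (- g)) \<notin> K"
      proof
        assume "(g, - f (- g)) \<in> K"
        then show False using False c R_trans R_sym unfolding Kdef by blast
      qed
      from Q[OF this False] have "(g, - f (- g) - - f 0) \<in> K" by simp
      then show ?thesis by blast
    qed
  qed
  define B where "B = {b. (0,b) \<in> K}"
  define A where "A = {a. (a,0) \<in> K}"
  have sB: "subgroup_add B" unfolding subgroup_add_def B_def using K0 Kadd Kneg by fastforce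
  have sA: "subgroup_add A" unfolding subgroup_add_def A_def using K0 Kadd Kneg by fastforce
  have KB: "(a,b) \<in> K \<longleftrightarrow> b \<in> B" if "a \<in> A" for a b
  proof
    assume "(a,b) \<in> K" then show "b \<in> B" using Ksub[OF _ that[unfolded A_def, simplified]] B_def by fastforce
  next
    assume "b \<in> B" then show "(a,b) \<in> K" using Kadd[OF that[unfolded A_def, simplified]] B_def by fastforce
  qed
  have "\<exists>h0. h0 \<notin> B"
  proof (rule ccontr)
    assume "\<not> (\<exists>h0. h0 \<notin> B)"
    then have "b \<in> B" for b by blast
    obtain b where "(a0,b) \<in> K" using proj by blast
    moreover have "(0, b0 - b) \<in> K" using \<open>\<And>b. b \<in> B\<close> B_def by blast
    ultimately show False using Kadd ab0 by fastforce
  qed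
  then obtain h0 where h0: "h0 \<notin> B" by blast
  have iB: "index_two B"
  proof (rule index_two_lemma[OF sB h0])
    fix x y assume "x \<notin> B" "y \<notin> B"
    then show "x - y \<in> B" using Q B_def by fastforce
  qed
  show ?thesis
  proof (cases "A = UNIV")
    case True
    then show ?thesis using sB iB KB K_def by auto
  next
    case False
    then obtain g0 where g0: "g0 \<notin> A" by blast
    have QA: "x - y \<in> A" if "x \<notin> A" "y \<notin> A" for x y
      using Q that A_def by fastforce
    have iA: "index_two A" by (rule index_two_lemma[OF sA g0 QA])
    have main: "line_in_S1 f a b \<longleftrightarrow>
               ((a \<in> A \<and> b \<in> B) \<or> (a \<in> (\<lambda>x. x + g) ` A \<and> b \<in> (\<lambda>y. y + h) ` B))"
      if g: "g \<notin> A" and h: "h \<notin> B" for g h a b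
    proof -
      have mh: "- h \<notin> B" using h sB unfolding subgroup_add_def by force
      have "(g - 0, 0 - - h) \<in> K" using Q[of g 0 0 "-h"] g mh A_def B_def by auto
      then have gh: "(g,h) \<in> K" by simp
      have L: "line_in_S1 f a b \<longleftrightarrow> (a,b) \<in> K" by (simp add: K_def)
      show ?thesis
      proof (cases "a \<in> A")
        case True
        have "a \<notin> (\<lambda>x. x + g) ` A"
        proof
          assume "a \<in> (\<lambda>x. x + g) ` A"
          then obtain x where "x \<in> A" "a = x + g" by blast
          then have "- x + a \<in> A" using True sA unfolding subgroup_add_def by blast
          then show False using g \<open>a = x + g\<close> by simp
        qed
        then show ?thesis using KB[OF True] L True by auto
      next
        case aF: False
        have am: "a - g \<in> A" using QA[OF aF g] .
        have aimg: "a \<in> (\<lambda>x. x + g) ` A" using am by (rule rev_image_eqI) simp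
        have "(a,b) \<in> K \<longleftrightarrow> (a - g, b - h) \<in> K"
          using Ksub[of a b g h] Kadd[of "a-g" "b-h" g h] gh by auto
        also have "\<dots> \<longleftrightarrow> b - h \<in> B" using KB[OF am] .
        also have "\<dots> \<longleftrightarrow> b \<in> (\<lambda>y. y + h) ` B"
        proof
          assume "b - h \<in> B" then show "b \<in> (\<lambda>y. y + h) ` B" by (rule rev_image_eqI) simp
        qed auto
        finally show ?thesis using L aF aimg by auto
      qed
    qed
    show ?thesis using sB iB sA iA main by blast
  qed
qed

end
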